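(* Assume the linear setting of the context. The function $f(\phi)=\sum_{k=1}^N c_k^{\rm e}\big(\exp(-q_k-z_k\phi)-1\big)$, $\phi\in\mathbb R$, has a unique minimizer $\phi_{\min}$. If $f(\phi_{\min})<0$, the linear pump-leak system has exactly one steady state $(\mathbf c^*,v^*,\phi^* )\in(0,\infty)^N\times(0,\infty)\times\mathbb R$; if $f(\phi_{\min})\ge 0$, it has no steady state.
   Context: Fix an integer $N\ge2$, real valences $z_1,\dots,z_N$ not all zero, $\mathbf z=(z_1,\dots,z_N)^T$, positive constants $c_1^{\rm e},\dots,c_N^{\rm e}$ with $\sum_kz_kc_k^{\rm e}=0$, a constant $A>0$ and a real number $z$. Let $L$ be a real symmetric positive definite $N\times N$ matrix, $\mathbf p\in\mathbb R^N$ a constant vector, $\zeta>0$, and $\mathbf q=(q_1,\dots,q_N)^T=L^{-1}\mathbf p$. For $\mathbf c\in(0,\infty)^N$, $v>0$, $\phi\in\mathbb R$ set $\gamma_k=\ln(c_k/c_k^{\rm e})$, $\mu_k=\gamma_k+z_k\phi$, $\boldsymbol\mu=(\mu_1,\dots,\mu_N)^T$, $\pi_{\rm w}=\sum_kc_k^{\rm e}-(\sum_kc_k+A/v)$. The linear pump-leak system is $$\frac{d}{dt}(v\mathbf c)=-L\boldsymbol\mu-\mathbf p,\qquad 0=\sum_kz_kc_k+\frac{zA}{v},\qquad \frac{dv}{dt}=-\zeta\pi_{\rm w}.$$ A steady state is a point $(\mathbf c,v,\phi)\in(0,\infty)^N\times(0,\infty)\times\mathbb R$ with $\sum_kz_kc_k+zA/v=0$,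 $L\boldsymbol\mu+\mathbf p=0$ and $\pi_{\rm w}=0$. *)

theory Defs
  imports "HOL-Analysis.Analysis"
begin

text \<open>Species are indexed by a finite type 'n with CARD('n) = N.
  zv = valence vector, ce = reference concentrations c^e.\<close>

definition spd :: "real^'n^'n \<Rightarrow> bool" where
  "spd L \<longleftrightarrow> transpose L = L \<and> (\<forall>x. x \<noteq> 0 \<longrightarrow> x \<bullet> (L *v x) > 0)"

definition chem_pot :: "real^'n \<Rightarrow> real^'n \<Rightarrow> real^'n \<Rightarrow> real \<Rightarrow> real^'n" where
  "chem_pot ce zv c \<phi> = (\<chi> k. ln (c$k / ce$k) + zv$k * \<phi>)"

definition osm_pressure :: "real^'n \<Rightarrow> real \<Rightarrow> real^'n \<Rightarrow> real \<Rightarrow> real" where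
  "osm_pressure ce A c v = (\<Sum>k\<in>UNIV. ce$k) - ((\<Sum>k\<in>UNIV. c$k) + A / v)"

definition steady_state ::
  "real^'n^'n \<Rightarrow> real^'n \<Rightarrow> real^'n \<Rightarrow> real^'n \<Rightarrow> real \<Rightarrow> real
     \<Rightarrow> real^'n \<Rightarrow> real \<Rightarrow> real \<Rightarrow> bool" where
  "steady_state L p ce zv A z c v \<phi> \<longleftrightarrow>
     (\<forall>k. c$k > 0) \<and> v > 0 \<and>
     (\<Sum>k\<in>UNIV. zv$k * c$k) + z * A / v = 0 \<and>
     L *v chem_pot ce zv c \<phi> + p = 0 \<and>
     osm_pressure ce A c v = 0"

definition fq :: "real^'n \<Rightarrow> real^'n \<Rightarrow> real^'n \<Rightarrow> real \<Rightarrow> real" where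
  "fq ce zv q \<phi> = (\<Sum>k\<in>UNIV. ce$k * (exp (- q$k - zv$k * \<phi>) - 1))"

end

theory Submission imports Defs begin

definition fd :: "real^'n \<Rightarrow> real^'n \<Rightarrow> real^'n \<Rightarrow> real \<Rightarrow> real" where
  "fd ce zv q x = (\<Sum>k\<in>UNIV. - (ce$k * zv$k * exp (- q$k - zv$k * x)))"
definition fdd :: "real^'n \<Rightarrow> real^'n \<Rightarrow> real^'n \<Rightarrow> real \<Rightarrow> real" where
  "fdd ce zv q x = (\<Sum>k\<in>UNIV. ce$k * (zv$k)^2 * exp (- q$k - zv$k * x))"

lemma fq_deriv: "(fq ce zv q has_real_derivative fd ce zv q x) (at x)"
  unfolding fq_def fd_def
  by (auto intro!: derivative_eq_intros simp: algebra_simps)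

lemma fd_deriv: "(fd ce zv q has_real_derivative fdd ce zv q x) (at x)"
  unfolding fdd_def fd_def
  by (auto intro!: derivative_eq_intros simp: algebra_simps power2_eq_square)

lemma fdd_pos:
  assumes "zv \<noteq> 0" "\<forall>k. ce$k > 0"
  shows "fdd ce zv q x > 0"
proof -
  obtain k where k: "zv$k \<noteq> 0" using assms(1) by (metis vec_eq_iff zero_index)
  show ?thesis unfolding fdd_def
    by (rule sum_pos2[where i=k]) (use k assms(2) in \<open>auto intro!: mult_nonneg_nonneg simp: less_imp_le\<close>)
qed

lemma fd_strict_mono:
  assumes "zv \<noteq> 0" "\<forall>k. ce$k > 0" "x < y"
  shows "fd ce zv q x < fd ce zv q y"
  using assms(3) by (rule DERIV_pos_imp_increasing) (use fd_deriv fdd_pos assms in blast)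

lemma fq_cont: "continuous_on S (fq ce zv q)"
  unfolding fq_def by (intro continuous_intros)

lemma coercive_right:
  assumes "zv$kk < 0" "\<forall>k. ce$k > 0"
  shows "\<exists>R. \<forall>x\<ge>R. fq ce zv q x > M"
proof -
  define S where "S = (\<Sum>k\<in>UNIV. ce$k)"
  define R where "R = ((M+S)/ce$kk - 1 + q$kk)/(- zv$kk) + 1"
  have c0: "ce$kk > 0" using assms by auto
  { fix x assume x: "x \<ge> R"
    have "fq ce zv q x = (\<Sum>k\<in>UNIV. ce$k * exp (- q$k - zv$k * x)) - S"
      unfolding fq_def S_def by (simp add: algebra_simps sum_subtractf)
    moreover have "ce$kk * exp (- q$kk - zv$kk * x) \<le> (\<Sum>k\<in>UNIV. ce$k * exp (- q$k - zv$k * x))"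
      by (rule member_le_sum) (use assms(2) in \<open>auto intro!: mult_nonneg_nonneg simp: less_imp_le\<close>)
    moreover have "ce$kk * (1 + (- q$kk - zv$kk * x)) \<le> ce$kk * exp (- q$kk - zv$kk * x)"
      using c0 by (intro mult_left_mono) auto
    moreover have "- zv$kk * x \<ge> - zv$kk * R"
      using x assms(1) by (intro mult_left_mono) auto
    moreover have "- zv$kk * R = (M+S)/ce$kk - 1 + q$kk - zv$kk"
      unfolding R_def using assms(1) by (simp add: field_simps)
    moreover have "ce$kk * ((M+S)/ce$kk - zv$kk) > M + S"
      using c0 assms(1) mult_pos_neg[of "ce$kk" "zv$kk"] by (simp add: right_diff_distrib)
    moreover have "(M+S)/ce$kk - zv$kk \<le> 1 + (- q$kk - zv$kk * x)"
      using calculation(4,5) by (simp add: algebra_simps)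
    moreover have "ce$kk * (1 + (- q$kk - zv$kk * x)) \<ge> ce$kk * ((M+S)/ce$kk - zv$kk)"
      using c0 calculation(7) by (intro mult_left_mono) simp_all
    ultimately have "fq ce zv q x > M"
      by (smt (verit))
  }
  then show ?thesis by blast
qed

lemma fq_neg: "fq ce (-zv) q (-x) = fq ce zv q x"
  unfolding fq_def by simp

lemma coercive_left:
  assumes "zv$kk > 0" "\<forall>k. ce$k > 0"
  shows "\<exists>R. \<forall>x\<le>R. fq ce zv q x > M"
proof -
  have "\<exists>R. \<forall>x\<ge>R. fq ce (-zv) q x > M"
    by (rule coercive_right[where kk=kk]) (use assms in auto)
  then obtain R where R: "\<forall>x\<ge>R. fq ce (-zv) q x > M" by blast
  show ?thesis
  proof (intro exI[of _ "-R"] allI impI)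
    fix x :: real assume "x \<le> -R"
    then have "-x \<ge> R" by simp
    then have "fq ce (-zv) q (-x) > M" using R by blast
    then show "fq ce zv q x > M" by (simp only: fq_neg)
  qed
qed

context
  fixes ce zv q :: "real^'n"
  assumes zv: "zv \<noteq> 0" and ce: "\<forall>k. ce$k > 0" and bal: "(\<Sum>k\<in>UNIV. zv$k * ce$k) = 0"
begin

lemma sign_neg: "\<exists>k. zv$k < 0"
proof (rule ccontr)
  assume "\<not> ?thesis"
  then have nn: "\<forall>k. 0 \<le> zv$k * ce$k" using ce by (simp add: not_less less_imp_le)
  obtain k where k: "zv$k \<noteq> 0" using zv by (metis vec_eq_iff zero_index)
  have "zv$k * ce$k = 0" using bal nn sum_nonneg_eq_0_iff[of UNIV "\<lambda>k. zv$k * ce$k"] by auto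
  then show False using k ce by (metis less_irrefl mult_eq_0_iff)
qed

lemma sign_pos: "\<exists>k. zv$k > 0"
proof (rule ccontr)
  assume "\<not> ?thesis"
  then have nn: "\<forall>k. 0 \<le> - (zv$k * ce$k)" using ce by (simp add: not_less mult_nonpos_nonneg less_imp_le)
  obtain k where k: "zv$k \<noteq> 0" using zv by (metis vec_eq_iff zero_index)
  have "(\<Sum>k\<in>UNIV. - (zv$k * ce$k)) = 0" using bal by (simp add: sum_negf)
  then have "- (zv$k * ce$k) = 0" using nn sum_nonneg_eq_0_iff[of UNIV "\<lambda>k. - (zv$k * ce$k)"] by auto
  then show False using k ce by (metis less_irrefl mult_eq_0_iff neg_equal_0_iff_equal)
qed

lemma coercive_both: "\<exists>R1 R2. (\<forall>x\<ge>R1. fq ce zv q x > M) \<and> (\<forall>x\<le>R2. fq ce zv q x > M)"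
proof -
  obtain k1 where "zv$k1 < 0" using sign_neg by blast
  then obtain R1 where "\<forall>x\<ge>R1. fq ce zv q x > M" using coercive_right[where kk=k1] ce by blast
  moreover obtain k2 where "zv$k2 > 0" using sign_pos by blast
  then obtain R2 where "\<forall>x\<le>R2. fq ce zv q x > M" using coercive_left[where kk=k2] ce by blast
  ultimately show ?thesis by blast
qed

lemma min_exists: "\<exists>m. \<forall>x. fq ce zv q m \<le> fq ce zv q x"
proof -
  obtain R1 R2 where R1: "\<forall>x\<ge>R1. fq ce zv q x > fq ce zv q 0" and R2: "\<forall>x\<le>R2. fq ce zv q x > fq ce zv q 0"
    using coercive_both by blast
  have "\<exists>m\<in>{min R2 0..max R1 0}. \<forall>y\<in>{min R2 0..max R1 0}. fq ce zv q m \<le> fq ce zv q y"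
    by (rule continuous_attains_inf) (auto intro: fq_cont)
  then obtain m where m: "m \<in> {min R2 0..max R1 0}" and mm: "\<forall>y\<in>{min R2 0..max R1 0}. fq ce zv q m \<le> fq ce zv q y"
    by blast
  have m0: "fq ce zv q m \<le> fq ce zv q 0" using mm by auto
  show ?thesis
  proof (intro exI allI)
    fix x
    show "fq ce zv q m \<le> fq ce zv q x"
    proof (cases "x \<in> {min R2 0..max R1 0}")
      case True then show ?thesis using mm by blast
    next
      case False
      then have "x > R1 \<or> x < R2" by auto
      then have "fq ce zv q x > fq ce zv q 0" using R1 R2 by force
      then show ?thesis using m0 by linarith
    qed
  qed
qed

lemma min_deriv: assumes "\<forall>x. fq ce zv q m \<le> fq ce zv q x" shows "fd ce zv q m = 0"
  by (rule DERIV_local_min[OF fq_deriv, of 1]) (use assms in auto)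

lemma min_unique:
  assumes "\<forall>x. fq ce zv q m1 \<le> fq ce zv q x" "\<forall>x. fq ce zv q m2 \<le> fq ce zv q x"
  shows "m1 = m2"
proof (rule ccontr)
  assume "m1 \<noteq> m2"
  then have "m1 < m2 \<or> m2 < m1" by auto
  then show False using fd_strict_mono[OF zv ce] min_deriv[OF assms(1)] min_deriv[OF assms(2)]
    by (metis less_irrefl)
qed

lemma fq_decr:
  assumes "fd ce zv q m = 0" "x \<le> y" "y \<le> m"
  shows "fq ce zv q y \<le> fq ce zv q x"
proof (rule DERIV_nonpos_imp_nonincreasing[OF assms(2)])
  fix t assume "x \<le> t" "t \<le> y"
  then have "fd ce zv q t \<le> fd ce zv q m"
    using fd_strict_mono[OF zv ce, of t m] assms(3) by (cases "t = m") (auto intro: less_imp_le)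
  then show "\<exists>d. (fq ce zv q has_real_derivative d) (at t) \<and> d \<le> 0"
    using fq_deriv[of ce zv q t] assms(1) by force
qed

lemma fq_incr:
  assumes "fd ce zv q m = 0" "m \<le> x" "x \<le> y"
  shows "fq ce zv q x \<le> fq ce zv q y"
proof (rule DERIV_nonneg_imp_nondecreasing[OF assms(3)])
  fix t assume "x \<le> t" "t \<le> y"
  then have "fd ce zv q t \<ge> fd ce zv q m"
    using fd_strict_mono[OF zv ce, of m t] assms(2) by (cases "t = m") (auto intro: less_imp_le)
  then show "\<exists>d. (fq ce zv q has_real_derivative d) (at t) \<and> d \<ge> 0"
    using fq_deriv[of ce zv q t] assms(1) by force
qed


lemma root_exists:
  assumes m: "\<forall>x. fq ce zv q m \<le> fq ce zv q x" and neg: "fq ce zv q m < 0"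
  shows "\<exists>\<phi>. fq ce zv q \<phi> < 0 \<and> fd ce zv q \<phi> + z * fq ce zv q \<phi> = 0"
proof -
  define f where "f = fq ce zv q"
  define h where "h x = exp (z * x) * f x" for x
  obtain R1 R2 where R1: "\<forall>x\<ge>R1. f x > 0" and R2: "\<forall>x\<le>R2. f x > 0"
    using coercive_both[of 0] unfolding f_def by blast
  have "f m < 0" using neg f_def by simp
  then have mR: "R2 < m" "m < R1" using R1 R2 by (meson not_le less_asym)+
  have hc: "continuous_on {R2..R1} h" unfolding h_def f_def
    by (intro continuous_intros fq_cont)
  obtain p where p: "p \<in> {R2..R1}" and pm: "\<forall>y\<in>{R2..R1}. h p \<le> h y"
    using continuous_attains_inf[OF compact_Icc _ hc] mR by auto
  have "h m < 0" unfolding h_def using \<open>f m < 0\<close> by (simp add: mult_pos_neg)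
  moreover have "h p \<le> h m" using pm mR by auto
  ultimately have hp: "h p < 0" by linarith
  have "h R1 > 0" "h R2 > 0" unfolding h_def using R1 R2 by auto
  then have pin: "R2 < p" "p < R1" using p hp by (metis atLeastAtMost_iff less_asym order.not_eq_order_implies_strict)+
  have hd: "(h has_real_derivative (exp (z * p) * z * f p + exp (z * p) * fd ce zv q p)) (at p)"
    unfolding h_def f_def
    by (auto intro!: derivative_eq_intros fq_deriv simp: algebra_simps)
  have "exp (z * p) * z * f p + exp (z * p) * fd ce zv q p = 0"
  proof (rule DERIV_local_min[OF hd, of "min (p - R2) (R1 - p)"])
    show "0 < min (p - R2) (R1 - p)" using pin by auto
    show "\<forall>y. \<bar>p - y\<bar> < min (p - R2) (R1 - p) \<longrightarrow> h p \<le> h y"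
      using pm by (auto simp: abs_if split: if_splits)
  qed
  then have "exp (z * p) * (fd ce zv q p + z * f p) = 0" by (simp add: algebra_simps)
  then have "fd ce zv q p + z * f p = 0" by simp
  moreover have "f p < 0" using hp unfolding h_def by (simp add: mult_less_0_iff)
  ultimately show ?thesis unfolding f_def by blast
qed

lemma root_unique_lt:
  assumes "a < b" "fq ce zv q a < 0" "fq ce zv q b < 0"
    "fd ce zv q a + z * fq ce zv q a = 0" "fd ce zv q b + z * fq ce zv q b = 0"
  shows False
proof -
  define f where "f = fq ce zv q"
  obtain m where m: "\<forall>x. f m \<le> f x" using min_exists f_def by blast
  have fdm: "fd ce zv q m = 0" using min_deriv m f_def by blast
  have fneg: "f t < 0" if "a \<le> t" "t \<le> b" for t
  proof (cases "t \<le> m")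
    case True
    then have "f t \<le> f a" using fq_decr[OF fdm \<open>a \<le> t\<close>] f_def by simp
    then show ?thesis using assms(2) f_def by simp
  next
    case False
    then have "f t \<le> f b" using fq_incr[OF fdm _ \<open>t \<le> b\<close>] f_def by simp
    then show ?thesis using assms(3) f_def by simp
  qed
  define r where "r t = fd ce zv q t / f t" for t
  have "r a > r b"
  proof (rule DERIV_neg_imp_decreasing[OF assms(1)])
    fix t assume t: "a \<le> t" "t \<le> b"
    have ft: "f t < 0" using fneg t by blast
    have rd: "(r has_real_derivative (fdd ce zv q t * f t - fd ce zv q t * fd ce zv q t) / (f t * f t)) (at t)"
      unfolding r_def f_def
      by (rule DERIV_divide[OF fd_deriv fq_deriv]) (use ft f_def in simp)
    moreover have "fdd ce zv q t * f t < 0" using fdd_pos[OF zv ce] ft by (simp add: mult_pos_neg)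
    moreover have "fd ce zv q t * fd ce zv q t \<ge> 0" by simp
    ultimately have num: "fdd ce zv q t * f t - fd ce zv q t * fd ce zv q t < 0" by linarith
    have den: "f t * f t > 0" using ft by (simp add: mult_neg_neg)
    show "\<exists>y. (r has_real_derivative y) (at t) \<and> y < 0"
      by (intro exI[of _ "(fdd ce zv q t * f t - fd ce zv q t * fd ce zv q t) / (f t * f t)"])
         (use rd divide_neg_pos[OF num den] in blast)
  qed
  moreover have "r a = - z" unfolding r_def using assms(2,4) f_def by (simp add: field_simps)
  moreover have "r b = - z" unfolding r_def using assms(3,5) f_def by (simp add: field_simps)
  ultimately show False by simp
qed

lemma root_unique:
  assumes "fq ce zv q a < 0" "fq ce zv q b < 0"
    "fd ce zv q a + z * fq ce zv q a = 0" "fd ce zv q b + z * fq ce zv q b = 0"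
  shows "a = b"
  using root_unique_lt[of a b z] root_unique_lt[of b a z] assms by (metis linorder_neqE)

end

lemma mv_neg: "(A::real^'n^'m) *v (- x) = - (A *v x)"
  by (simp add: vec_eq_iff matrix_vector_mult_def sum_negf)

lemma spd_inv:
  assumes "spd (L::real^'n^'n)" and "Q = matrix_inv L *v p"
  shows "L *v \<mu> + p = 0 \<longleftrightarrow> \<mu> = - Q"
proof -
  have ker: "\<forall>x. L *v x = 0 \<longrightarrow> x = 0"
  proof (intro allI impI)
    fix x assume "L *v x = 0"
    then have "x \<bullet> (L *v x) = 0" by simp
    then show "x = 0" using assms(1) unfolding spd_def by (metis less_irrefl)
  qed
  then have "invertible L" using matrix_left_invertible_ker invertible_left_inverse by blast
  then have "\<exists>A'. L ** A' = mat 1 \<and> A' ** L = mat 1" unfolding invertible_def by blast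
  then have LI: "L ** matrix_inv L = mat 1 \<and> matrix_inv L ** L = mat 1"
    unfolding matrix_inv_def by (rule someI_ex)
  show ?thesis
  proof
    assume "L *v \<mu> + p = 0"
    then have "L *v \<mu> = - p" by (simp add: eq_neg_iff_add_eq_0)
    then have "matrix_inv L *v (L *v \<mu>) = matrix_inv L *v (- p)" by simp
    then show "\<mu> = - Q" using LI assms(2) by (simp add: matrix_vector_mul_assoc mv_neg)
  next
    assume "\<mu> = - Q"
    then have "L *v \<mu> = - ((L ** matrix_inv L) *v p)"
      using assms(2) by (simp add: mv_neg matrix_vector_mul_assoc)
    then show "L *v \<mu> + p = 0" using LI by simp
  qed
qed

lemma sum_c_eq:
  "(\<Sum>k\<in>UNIV. (\<chi> k. ce$k * exp (- Q$k - zv$k * \<phi>)) $ k) = fq ce zv Q \<phi> + (\<Sum>k\<in>UNIV. ce$k)"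
  unfolding fq_def by (simp add: algebra_simps sum_subtractf)

lemma sum_zc_eq:
  "(\<Sum>k\<in>UNIV. zv$k * (\<chi> k. ce$k * exp (- Q$k - zv$k * \<phi>)) $ k) = - fd ce zv Q \<phi>"
  unfolding fd_def by (simp add: algebra_simps sum_negf)

lemma c_char:
  assumes ce: "\<forall>k. ce$k > 0"
  shows "((\<forall>k. c$k > 0) \<and> chem_pot ce zv c \<phi> = - Q) \<longleftrightarrow> c = (\<chi> k. ce$k * exp (- Q$k - zv$k * \<phi>))"
proof
  assume h: "(\<forall>k. c$k > 0) \<and> chem_pot ce zv c \<phi> = - Q"
  show "c = (\<chi> k. ce$k * exp (- Q$k - zv$k * \<phi>))"
  proof (subst vec_eq_iff, intro allI)
    fix k
    have "ln (c$k / ce$k) + zv$k * \<phi> = - Q$k"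
      using h unfolding chem_pot_def by (metis vec_lambda_beta vector_uminus_component)
    then have "ln (c$k / ce$k) = - Q$k - zv$k * \<phi>" by simp
    then have "c$k / ce$k = exp (- Q$k - zv$k * \<phi>)"
      using h ce by (metis divide_pos_pos exp_ln)
    then show "c$k = (\<chi> k. ce$k * exp (- Q$k - zv$k * \<phi>)) $ k"
    proof -
      have "ce$k > 0" using ce by blast
      then have "c$k = ce$k * (c$k / ce$k)" by simp
      then show ?thesis using \<open>c$k / ce$k = exp (- Q$k - zv$k * \<phi>)\<close> by simp
    qed
  qed
next
  assume h: "c = (\<chi> k. ce$k * exp (- Q$k - zv$k * \<phi>))"
  have pos: "\<forall>k. c$k > 0" using h ce by simp
  moreover have "chem_pot ce zv c \<phi> = - Q"
    unfolding chem_pot_def h using ce by (simp add: vec_eq_iff ln_mult) (metis less_irrefl)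
  ultimately show "(\<forall>k. c$k > 0) \<and> chem_pot ce zv c \<phi> = - Q" by blast
qed

lemma ss_char:
  assumes spd: "spd L" and Q: "Q = matrix_inv L *v p" and ce: "\<forall>k. ce$k > 0" and A: "A > 0"
  shows "steady_state L p ce zv A z c v \<phi> \<longleftrightarrow>
    (c = (\<chi> k. ce$k * exp (- Q$k - zv$k * \<phi>)) \<and> fq ce zv Q \<phi> < 0 \<and>
     fd ce zv Q \<phi> + z * fq ce zv Q \<phi> = 0 \<and> v = - A / fq ce zv Q \<phi>)"
proof
  assume ss: "steady_state L p ce zv A z c v \<phi>"
  then have c: "c = (\<chi> k. ce$k * exp (- Q$k - zv$k * \<phi>))"
    using c_char[OF ce] spd_inv[OF spd Q] unfolding steady_state_def by blast
  have v: "v > 0" using ss unfolding steady_state_def by blast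
  have osm: "A / v = - fq ce zv Q \<phi>"
    using ss sum_c_eq[of ce Q zv \<phi>] unfolding steady_state_def osm_pressure_def c[symmetric] by linarith
  have fneg: "fq ce zv Q \<phi> < 0" using osm A v by (metis divide_pos_pos neg_0_less_iff_less)
  have "(\<Sum>k\<in>UNIV. zv$k * c$k) + z * (A / v) = 0" using ss unfolding steady_state_def by simp
  then have "fd ce zv Q \<phi> + z * fq ce zv Q \<phi> = 0"
    using sum_zc_eq[of zv ce Q \<phi>] osm unfolding c[symmetric] by simp
  moreover have "v = - A / fq ce zv Q \<phi>" using osm v fneg by (simp add: field_simps)
  ultimately show "c = (\<chi> k. ce$k * exp (- Q$k - zv$k * \<phi>)) \<and> fq ce zv Q \<phi> < 0 \<and>
     fd ce zv Q \<phi> + z * fq ce zv Q \<phi> = 0 \<and> v = - A / fq ce zv Q \<phi>" using c fneg by blast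
next
  assume h: "c = (\<chi> k. ce$k * exp (- Q$k - zv$k * \<phi>)) \<and> fq ce zv Q \<phi> < 0 \<and>
     fd ce zv Q \<phi> + z * fq ce zv Q \<phi> = 0 \<and> v = - A / fq ce zv Q \<phi>"
  then have c: "c = (\<chi> k. ce$k * exp (- Q$k - zv$k * \<phi>))" and fneg: "fq ce zv Q \<phi> < 0"
    and root: "fd ce zv Q \<phi> + z * fq ce zv Q \<phi> = 0" and vd: "v = - A / fq ce zv Q \<phi>" by blast+
  have cc: "(\<forall>k. c$k > 0) \<and> chem_pot ce zv c \<phi> = - Q" using c_char[OF ce] c by blast
  have v: "v > 0" using vd A fneg by (simp add: divide_pos_neg)
  have osm: "A / v = - fq ce zv Q \<phi>" using vd v fneg by (simp add: field_simps)
  have e1: "(\<Sum>k\<in>UNIV. zv$k * c$k) + z * A / v = 0"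
    using sum_zc_eq[of zv ce Q \<phi>] osm root unfolding c[symmetric]
    by (simp add: times_divide_eq_right[symmetric])
  have e2: "osm_pressure ce A c v = 0"
    unfolding osm_pressure_def using sum_c_eq[of ce Q zv \<phi>] osm unfolding c[symmetric] by simp
  show "steady_state L p ce zv A z c v \<phi>"
    unfolding steady_state_def using cc spd_inv[OF spd Q] v e1 e2 by blast
qed


theorem proposition2:
  fixes L :: "real^'n^'n" and p ce zv :: "real^'n"
    and A z \<zeta> :: real
  assumes "CARD('n) \<ge> 2"
    and "zv \<noteq> 0"
    and "\<forall>k. ce$k > 0"
    and "(\<Sum>k\<in>UNIV. zv$k * ce$k) = 0"
    and "A > 0"
    and "spd L"
    and "\<zeta> > 0"
  shows "let q = matrix_inv L *v p; f = fq ce zv q in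
    (\<exists>!\<phi>m. \<forall>\<phi>. f \<phi>m \<le> f \<phi>) \<and>
    (\<forall>\<phi>m. (\<forall>\<phi>. f \<phi>m \<le> f \<phi>) \<longrightarrow>
       (f \<phi>m < 0 \<longrightarrow>
          (\<exists>!s. steady_state L p ce zv A z (fst s) (fst (snd s)) (snd (snd s)))) \<and>
       (f \<phi>m \<ge> 0 \<longrightarrow>
          \<not> (\<exists>c v \<phi>. steady_state L p ce zv A z c v \<phi>)))"
proof -
  define Q where "Q = matrix_inv L *v p"
  note zv = assms(2) and ce = assms(3) and bal = assms(4) and A = assms(5) and spd = assms(6)
  note ssc = ss_char[OF spd Q_def ce A]
  have part1: "\<exists>!\<phi>m. \<forall>\<phi>. fq ce zv Q \<phi>m \<le> fq ce zv Q \<phi>"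
    using min_exists[OF zv ce bal] min_unique[OF zv ce bal] by blast
  have part2: "(fq ce zv Q \<phi>m < 0 \<longrightarrow>
          (\<exists>!s. steady_state L p ce zv A z (fst s) (fst (snd s)) (snd (snd s)))) \<and>
       (fq ce zv Q \<phi>m \<ge> 0 \<longrightarrow>
          \<not> (\<exists>c v \<phi>. steady_state L p ce zv A z c v \<phi>))"
    if m: "\<forall>\<phi>. fq ce zv Q \<phi>m \<le> fq ce zv Q \<phi>" for \<phi>m
  proof (intro conjI impI)
    assume neg: "fq ce zv Q \<phi>m < 0"
    obtain \<phi>s where r: "fq ce zv Q \<phi>s < 0" "fd ce zv Q \<phi>s + z * fq ce zv Q \<phi>s = 0"
      using root_exists[OF zv ce bal m neg] by blast
    define s where "s = ((\<chi> k. ce$k * exp (- Q$k - zv$k * \<phi>s)), - A / fq ce zv Q \<phi>s, \<phi>s)"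
    show "\<exists>!s. steady_state L p ce zv A z (fst s) (fst (snd s)) (snd (snd s))"
    proof (rule ex1I[of _ s])
      show "steady_state L p ce zv A z (fst s) (fst (snd s)) (snd (snd s))"
        unfolding s_def using ssc r by simp
    next
      fix s' assume h: "steady_state L p ce zv A z (fst s') (fst (snd s')) (snd (snd s'))"
      obtain c' v' \<phi>' where s': "s' = (c', v', \<phi>')" by (metis prod.collapse)
      have hh: "c' = (\<chi> k. ce$k * exp (- Q$k - zv$k * \<phi>')) \<and> fq ce zv Q \<phi>' < 0 \<and>
        fd ce zv Q \<phi>' + z * fq ce zv Q \<phi>' = 0 \<and> v' = - A / fq ce zv Q \<phi>'"
        using h ssc unfolding s' by simp
      then have "\<phi>' = \<phi>s" using root_unique[OF zv ce bal] r by blast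
      then show "s' = s" using hh unfolding s' s_def by simp
    qed
  next
    assume nn: "fq ce zv Q \<phi>m \<ge> 0"
    show "\<not> (\<exists>c v \<phi>. steady_state L p ce zv A z c v \<phi>)"
    proof
      assume "\<exists>c v \<phi>. steady_state L p ce zv A z c v \<phi>"
      then obtain c v \<phi> where "steady_state L p ce zv A z c v \<phi>" by blast
      then have "fq ce zv Q \<phi> < 0" using ssc by blast
      moreover have "fq ce zv Q \<phi>m \<le> fq ce zv Q \<phi>" using m by blast
      ultimately show False using nn by linarith
    qed
  qed
  show ?thesis unfolding Let_def Q_def[symmetric] using part1 part2 by blast
qed

end
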